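(* Let $1\to N\to\Gamma\to Q\to 1$ be an extension of finitely generated groups such that $N$ and $Q$ are infinite and $N$ is an acentral subgroup of $\Gamma$. Then $\Gamma$ is not presentable by a product.
   Context: A subgroup $A$ of a group $\Gamma$ is called acentral if for every $g\in A\setminus\{1\}$ the centraliser $C_\Gamma(g)$ is contained in $A$. An infinite group $\Gamma$ is not presentable by a product if for every homomorphism $\varphi\colon \Gamma_1\times\Gamma_2\to\Gamma$ whose image has finite index in $\Gamma$, at least one of $\varphi(\Gamma_1)$, $\varphi(\Gamma_2)$ is finite. *)

theory Defs
  imports "HOL-Algebra.Algebra"
begin

definition fin_gen :: "('a, 'm) monoid_scheme \<Rightarrow> bool" where
  "fin_gen G \<longleftrightarrow> (\<exists>S. finite S \<and> S \<subseteq> carrier G \<and> generate G S = carrier G)"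

definition centraliser :: "('a, 'm) monoid_scheme \<Rightarrow> 'a \<Rightarrow> 'a set" where
  "centraliser G g = {h \<in> carrier G. h \<otimes>\<^bsub>G\<^esub> g = g \<otimes>\<^bsub>G\<^esub> h}"

definition acentral :: "('a, 'm) monoid_scheme \<Rightarrow> 'a set \<Rightarrow> bool" where
  "acentral G A \<longleftrightarrow> subgroup A G \<and>
     (\<forall>g \<in> A - {\<one>\<^bsub>G\<^esub>}. centraliser G g \<subseteq> A)"

text \<open>Not presentable by a product, with the factor groups ranging over all groups
  carried by the types 'b and 'c (type variables are universally quantified at theorem level).\<close>
definition not_presentable_by_product ::
  "('a, 'm) monoid_scheme \<Rightarrow> 'b itself \<Rightarrow> 'c itself \<Rightarrow> bool" where
  "not_presentable_by_product G _ _ \<longleftrightarrow> infinite (carrier G) \<and>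
    (\<forall>(G1 :: 'b monoid) (G2 :: 'c monoid) \<phi>.
        group G1 \<longrightarrow> group G2 \<longrightarrow> \<phi> \<in> hom (G1 \<times>\<times> G2) G \<longrightarrow>
        finite (rcosets\<^bsub>G\<^esub> (\<phi> ` carrier (G1 \<times>\<times> G2))) \<longrightarrow>
        finite (\<phi> ` (carrier G1 \<times> {\<one>\<^bsub>G2\<^esub>})) \<or> finite (\<phi> ` ({\<one>\<^bsub>G1\<^esub>} \<times> carrier G2)))"

end

theory Submission
  imports Defs
begin

theorem corollary3p3:
  fixes N :: "('n, 'x) monoid_scheme" and \<Gamma> :: "('g, 'y) monoid_scheme"
    and Q :: "('q, 'z) monoid_scheme"
    and i :: "'n \<Rightarrow> 'g" and p :: "'g \<Rightarrow> 'q"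
  assumes "group N" and "group \<Gamma>" and "group Q"
    and "i \<in> hom N \<Gamma>" and "inj_on i (carrier N)"
    and "p \<in> hom \<Gamma> Q" and "p ` carrier \<Gamma> = carrier Q"
    and "i ` carrier N = kernel \<Gamma> Q p"
    and "fin_gen N" and "fin_gen \<Gamma>" and "fin_gen Q"
    and "infinite (carrier N)" and "infinite (carrier Q)"
    and "acentral \<Gamma> (i ` carrier N)"
  shows "not_presentable_by_product \<Gamma> TYPE('b) TYPE('c)"
proof -
  interpret G: group \<Gamma> by fact
  interpret QQ: group Q by fact
  interpret PH: group_hom \<Gamma> Q p
    unfolding group_hom_def group_hom_axioms_def using assms(2,3,6) by (intro conjI)
  define A where "A = i ` carrier N"
  have AK: "A = kernel \<Gamma> Q p" unfolding A_def by (rule assms(8))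
  have acent: "\<And>g h. g \<in> A \<Longrightarrow> g \<noteq> \<one>\<^bsub>\<Gamma>\<^esub> \<Longrightarrow> h \<in> carrier \<Gamma> \<Longrightarrow> h \<otimes>\<^bsub>\<Gamma>\<^esub> g = g \<otimes>\<^bsub>\<Gamma>\<^esub> h \<Longrightarrow> h \<in> A"
  proof -
    fix g h assume "g \<in> A" "g \<noteq> \<one>\<^bsub>\<Gamma>\<^esub>" "h \<in> carrier \<Gamma>" "h \<otimes>\<^bsub>\<Gamma>\<^esub> g = g \<otimes>\<^bsub>\<Gamma>\<^esub> h"
    moreover have "\<forall>g \<in> A - {\<one>\<^bsub>\<Gamma>\<^esub>}. centraliser \<Gamma> g \<subseteq> A"
      using assms(14) unfolding acentral_def A_def by (elim conjE)
    ultimately show "h \<in> A" unfolding centraliser_def by blast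
  qed
  have kerI: "\<And>x. x \<in> carrier \<Gamma> \<Longrightarrow> p x = \<one>\<^bsub>Q\<^esub> \<Longrightarrow> x \<in> A"
    using AK unfolding kernel_def by simp
  have kerD: "\<And>x. x \<in> A \<Longrightarrow> x \<in> carrier \<Gamma> \<and> p x = \<one>\<^bsub>Q\<^esub>"
    using AK unfolding kernel_def by simp
  have pc: "\<And>x. x \<in> carrier \<Gamma> \<Longrightarrow> p x \<in> carrier Q" by (rule PH.hom_closed)
  have pm: "\<And>x y. x \<in> carrier \<Gamma> \<Longrightarrow> y \<in> carrier \<Gamma> \<Longrightarrow> p (x \<otimes>\<^bsub>\<Gamma>\<^esub> y) = p x \<otimes>\<^bsub>Q\<^esub> p y"
    by (rule PH.hom_mult)
  have Asub: "A \<subseteq> carrier \<Gamma>" using kerD by blast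
  have Ainf: "infinite A" unfolding A_def using assms(5,12) finite_imageD by blast
  show ?thesis
    unfolding not_presentable_by_product_def
  proof (intro conjI allI impI)
    show "infinite (carrier \<Gamma>)" using Ainf Asub finite_subset by blast
  next
    fix G1 :: "'b monoid" and G2 :: "'c monoid" and \<phi>
    assume g1: "group G1" and g2: "group G2" and hom: "\<phi> \<in> hom (G1 \<times>\<times> G2) \<Gamma>"
      and fin: "finite (rcosets\<^bsub>\<Gamma>\<^esub> (\<phi> ` carrier (G1 \<times>\<times> G2)))"
    interpret G1: group G1 by fact
    interpret G2: group G2 by fact
    interpret GH: group_hom "G1 \<times>\<times> G2" \<Gamma> \<phi>
      unfolding group_hom_def group_hom_axioms_def
      using DirProd_group[OF g1 g2] assms(2) hom by (intro conjI)
    let ?H = "\<phi> ` carrier (G1 \<times>\<times> G2)"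
    have Hsub: "subgroup ?H \<Gamma>" by (rule GH.img_is_subgroup)
    have phc: "\<And>x y. x \<in> carrier G1 \<Longrightarrow> y \<in> carrier G2 \<Longrightarrow> \<phi> (x,y) \<in> carrier \<Gamma>"
      using GH.hom_closed by simp
    have phm: "\<And>x y x' y'. x \<in> carrier G1 \<Longrightarrow> y \<in> carrier G2 \<Longrightarrow> x' \<in> carrier G1 \<Longrightarrow> y' \<in> carrier G2
        \<Longrightarrow> \<phi> (x,y) \<otimes>\<^bsub>\<Gamma>\<^esub> \<phi> (x',y') = \<phi> (x \<otimes>\<^bsub>G1\<^esub> x', y \<otimes>\<^bsub>G2\<^esub> y')"
    proof -
      fix x y x' y' assume "x \<in> carrier G1" "y \<in> carrier G2" "x' \<in> carrier G1" "y' \<in> carrier G2"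
      then show "\<phi> (x,y) \<otimes>\<^bsub>\<Gamma>\<^esub> \<phi> (x',y') = \<phi> (x \<otimes>\<^bsub>G1\<^esub> x', y \<otimes>\<^bsub>G2\<^esub> y')"
        using GH.hom_mult[of "(x,y)" "(x',y')"] by simp
    qed
    have pphi1: "\<And>x y. x \<in> carrier G1 \<Longrightarrow> y \<in> carrier G2 \<Longrightarrow> \<phi> (x,y) = \<phi> (x,\<one>\<^bsub>G2\<^esub>) \<otimes>\<^bsub>\<Gamma>\<^esub> \<phi> (\<one>\<^bsub>G1\<^esub>,y)"
      using phm by simp
    have pphi2: "\<And>x y. x \<in> carrier G1 \<Longrightarrow> y \<in> carrier G2 \<Longrightarrow> \<phi> (x,y) = \<phi> (\<one>\<^bsub>G1\<^esub>,y) \<otimes>\<^bsub>\<Gamma>\<^esub> \<phi> (x,\<one>\<^bsub>G2\<^esub>)"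
      using phm by simp
    show "finite (\<phi> ` (carrier G1 \<times> {\<one>\<^bsub>G2\<^esub>})) \<or> finite (\<phi> ` ({\<one>\<^bsub>G1\<^esub>} \<times> carrier G2))"
    proof (rule ccontr)
      assume "\<not> ?thesis"
      then have inf1: "infinite (\<phi> ` (carrier G1 \<times> {\<one>\<^bsub>G2\<^esub>}))"
        and inf2: "infinite (\<phi> ` ({\<one>\<^bsub>G1\<^esub>} \<times> carrier G2))" by auto
      have "\<exists>a \<in> A \<inter> ?H. a \<noteq> \<one>\<^bsub>\<Gamma>\<^esub>"
      proof (rule ccontr)
        assume "\<not> ?thesis"
        hence triv: "\<And>a. a \<in> A \<Longrightarrow> a \<in> ?H \<Longrightarrow> a = \<one>\<^bsub>\<Gamma>\<^esub>" by blast
        have inj: "inj_on (\<lambda>a. ?H #>\<^bsub>\<Gamma>\<^esub> a) A"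
        proof (rule inj_onI)
          fix a b assume a: "a \<in> A" and b: "b \<in> A" and e: "?H #>\<^bsub>\<Gamma>\<^esub> a = ?H #>\<^bsub>\<Gamma>\<^esub> b"
          have ac: "a \<in> carrier \<Gamma>" and bc: "b \<in> carrier \<Gamma>" using a b Asub by auto
          have "a \<in> ?H #>\<^bsub>\<Gamma>\<^esub> a" using G.rcos_self[OF ac Hsub] .
          hence "a \<in> ?H #>\<^bsub>\<Gamma>\<^esub> b" using e by simp
          hence inH: "a \<otimes>\<^bsub>\<Gamma>\<^esub> inv\<^bsub>\<Gamma>\<^esub> b \<in> ?H"
            using subgroup.rcos_module_imp[OF Hsub assms(2) bc] by blast
          have "p (a \<otimes>\<^bsub>\<Gamma>\<^esub> inv\<^bsub>\<Gamma>\<^esub> b) = \<one>\<^bsub>Q\<^esub>"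
            using pm[OF ac G.inv_closed[OF bc]] kerD[OF a] kerD[OF b] PH.hom_inv[OF bc] by simp
          hence "a \<otimes>\<^bsub>\<Gamma>\<^esub> inv\<^bsub>\<Gamma>\<^esub> b \<in> A" using kerI ac bc by simp
          hence "a \<otimes>\<^bsub>\<Gamma>\<^esub> inv\<^bsub>\<Gamma>\<^esub> b = \<one>\<^bsub>\<Gamma>\<^esub>" using triv inH by blast
          thus "a = b" using G.inv_solve_right'[OF G.one_closed ac bc] bc by simp
        qed
        have sb: "(\<lambda>a. ?H #>\<^bsub>\<Gamma>\<^esub> a) ` A \<subseteq> rcosets\<^bsub>\<Gamma>\<^esub> ?H"
          using Asub unfolding RCOSETS_def by blast
        have "finite A"
          using finite_imageD[OF finite_subset[OF sb fin] inj] by blast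
        thus False using Ainf by blast
      qed
      then obtain a where aA: "a \<in> A" and aH: "a \<in> ?H" and a1: "a \<noteq> \<one>\<^bsub>\<Gamma>\<^esub>" by blast
      then obtain x0 y0 where x0: "x0 \<in> carrier G1" and y0: "y0 \<in> carrier G2" and ax: "a = \<phi> (x0,y0)"
        by auto
      have ac: "a \<in> carrier \<Gamma>" and pa: "p a = \<one>\<^bsub>Q\<^esub>" using kerD[OF aA] by auto
      have "\<exists>b \<in> A. b \<noteq> \<one>\<^bsub>\<Gamma>\<^esub> \<and> (\<exists>y \<in> carrier G2. b = \<phi> (\<one>\<^bsub>G1\<^esub>,y))"
      proof (rule ccontr)
        assume "\<not> ?thesis"
        hence triv2: "\<And>y. y \<in> carrier G2 \<Longrightarrow> \<phi> (\<one>\<^bsub>G1\<^esub>,y) \<in> A \<Longrightarrow> \<phi> (\<one>\<^bsub>G1\<^esub>,y) = \<one>\<^bsub>\<Gamma>\<^esub>" by blast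
        have all1: "\<And>y. y \<in> carrier G2 \<Longrightarrow> \<phi> (\<one>\<^bsub>G1\<^esub>,y) = \<one>\<^bsub>\<Gamma>\<^esub>"
        proof -
          fix y assume y: "y \<in> carrier G2"
          define u where "u = \<phi> (\<one>\<^bsub>G1\<^esub>,y)"
          have uc: "u \<in> carrier \<Gamma>" unfolding u_def using phc y by simp
          define w where "w = (y0 \<otimes>\<^bsub>G2\<^esub> y) \<otimes>\<^bsub>G2\<^esub> inv\<^bsub>G2\<^esub> (y \<otimes>\<^bsub>G2\<^esub> y0)"
          have wc: "w \<in> carrier G2" unfolding w_def using y y0 by simp
          have wy: "w \<otimes>\<^bsub>G2\<^esub> (y \<otimes>\<^bsub>G2\<^esub> y0) = y0 \<otimes>\<^bsub>G2\<^esub> y"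
            unfolding w_def using y y0 G2.inv_solve_right'[of "y0 \<otimes>\<^bsub>G2\<^esub> y" "_" "y \<otimes>\<^bsub>G2\<^esub> y0"]
            by (simp add: G2.m_assoc)
          define v where "v = \<phi> (\<one>\<^bsub>G1\<^esub>,w)"
          have vc: "v \<in> carrier \<Gamma>" unfolding v_def using phc wc by simp
          have e1: "a \<otimes>\<^bsub>\<Gamma>\<^esub> u = \<phi> (x0, y0 \<otimes>\<^bsub>G2\<^esub> y)"
            unfolding ax u_def using phm x0 y0 y by simp
          have e2: "u \<otimes>\<^bsub>\<Gamma>\<^esub> a = \<phi> (x0, y \<otimes>\<^bsub>G2\<^esub> y0)"
            unfolding ax u_def using phm x0 y0 y by simp
          have e3: "a \<otimes>\<^bsub>\<Gamma>\<^esub> u = v \<otimes>\<^bsub>\<Gamma>\<^esub> (u \<otimes>\<^bsub>\<Gamma>\<^esub> a)"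
            unfolding e1 e2 v_def using phm[of "\<one>\<^bsub>G1\<^esub>" w x0 "y \<otimes>\<^bsub>G2\<^esub> y0"] x0 y0 y wc wy by simp
          have "p u = p v \<otimes>\<^bsub>Q\<^esub> p u"
            using arg_cong[OF e3, of p] pm ac uc vc pa pc by simp
          hence "p v = \<one>\<^bsub>Q\<^esub>" using pc uc vc by simp
          hence "v \<in> A" using kerI vc by simp
          hence "v = \<one>\<^bsub>\<Gamma>\<^esub>" unfolding v_def using triv2 wc by simp
          hence "u \<otimes>\<^bsub>\<Gamma>\<^esub> a = a \<otimes>\<^bsub>\<Gamma>\<^esub> u" using e3 uc ac by simp
          hence "u \<in> A" using acent[OF aA a1 uc] by simp
          thus "\<phi> (\<one>\<^bsub>G1\<^esub>,y) = \<one>\<^bsub>\<Gamma>\<^esub>" using triv2 y unfolding u_def by simp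
        qed
        have "\<phi> ` ({\<one>\<^bsub>G1\<^esub>} \<times> carrier G2) \<subseteq> {\<one>\<^bsub>\<Gamma>\<^esub>}" using all1 by auto
        hence "finite (\<phi> ` ({\<one>\<^bsub>G1\<^esub>} \<times> carrier G2))" using finite_subset by blast
        thus False using inf2 by blast
      qed
      then obtain y1 where y1: "y1 \<in> carrier G2" and bA: "\<phi> (\<one>\<^bsub>G1\<^esub>,y1) \<in> A"
        and b1: "\<phi> (\<one>\<^bsub>G1\<^esub>,y1) \<noteq> \<one>\<^bsub>\<Gamma>\<^esub>" by blast
      have "\<exists>b \<in> A. b \<noteq> \<one>\<^bsub>\<Gamma>\<^esub> \<and> (\<exists>x \<in> carrier G1. b = \<phi> (x,\<one>\<^bsub>G2\<^esub>))"
      proof (rule ccontr)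
        assume "\<not> ?thesis"
        hence triv2: "\<And>x. x \<in> carrier G1 \<Longrightarrow> \<phi> (x,\<one>\<^bsub>G2\<^esub>) \<in> A \<Longrightarrow> \<phi> (x,\<one>\<^bsub>G2\<^esub>) = \<one>\<^bsub>\<Gamma>\<^esub>" by blast
        have all1: "\<And>x. x \<in> carrier G1 \<Longrightarrow> \<phi> (x,\<one>\<^bsub>G2\<^esub>) = \<one>\<^bsub>\<Gamma>\<^esub>"
        proof -
          fix y assume y: "y \<in> carrier G1"
          define u where "u = \<phi> (y,\<one>\<^bsub>G2\<^esub>)"
          have uc: "u \<in> carrier \<Gamma>" unfolding u_def using phc y by simp
          define w where "w = (x0 \<otimes>\<^bsub>G1\<^esub> y) \<otimes>\<^bsub>G1\<^esub> inv\<^bsub>G1\<^esub> (y \<otimes>\<^bsub>G1\<^esub> x0)"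
          have wc: "w \<in> carrier G1" unfolding w_def using y x0 by simp
          have wy: "w \<otimes>\<^bsub>G1\<^esub> (y \<otimes>\<^bsub>G1\<^esub> x0) = x0 \<otimes>\<^bsub>G1\<^esub> y"
            unfolding w_def using y x0 G1.inv_solve_right'[of "x0 \<otimes>\<^bsub>G1\<^esub> y" "_" "y \<otimes>\<^bsub>G1\<^esub> x0"]
            by (simp add: G1.m_assoc)
          define v where "v = \<phi> (w,\<one>\<^bsub>G2\<^esub>)"
          have vc: "v \<in> carrier \<Gamma>" unfolding v_def using phc wc by simp
          have e1: "a \<otimes>\<^bsub>\<Gamma>\<^esub> u = \<phi> (x0 \<otimes>\<^bsub>G1\<^esub> y, y0)"
            unfolding ax u_def using phm x0 y0 y by simp
          have e2: "u \<otimes>\<^bsub>\<Gamma>\<^esub> a = \<phi> (y \<otimes>\<^bsub>G1\<^esub> x0, y0)"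
            unfolding ax u_def using phm x0 y0 y by simp
          have e3: "a \<otimes>\<^bsub>\<Gamma>\<^esub> u = v \<otimes>\<^bsub>\<Gamma>\<^esub> (u \<otimes>\<^bsub>\<Gamma>\<^esub> a)"
            unfolding e1 e2 v_def using phm[of w "\<one>\<^bsub>G2\<^esub>" "y \<otimes>\<^bsub>G1\<^esub> x0" y0] x0 y0 y wc wy by simp
          have "p u = p v \<otimes>\<^bsub>Q\<^esub> p u"
            using arg_cong[OF e3, of p] pm ac uc vc pa pc by simp
          hence "p v = \<one>\<^bsub>Q\<^esub>" using pc uc vc by simp
          hence "v \<in> A" using kerI vc by simp
          hence "v = \<one>\<^bsub>\<Gamma>\<^esub>" unfolding v_def using triv2 wc by simp
          hence "u \<otimes>\<^bsub>\<Gamma>\<^esub> a = a \<otimes>\<^bsub>\<Gamma>\<^esub> u" using e3 uc ac by simp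
          hence "u \<in> A" using acent[OF aA a1 uc] by simp
          thus "\<phi> (y,\<one>\<^bsub>G2\<^esub>) = \<one>\<^bsub>\<Gamma>\<^esub>" using triv2 y unfolding u_def by simp
        qed
        have "\<phi> ` (carrier G1 \<times> {\<one>\<^bsub>G2\<^esub>}) \<subseteq> {\<one>\<^bsub>\<Gamma>\<^esub>}" using all1 by auto
        hence "finite (\<phi> ` (carrier G1 \<times> {\<one>\<^bsub>G2\<^esub>}))" using finite_subset by blast
        thus False using inf1 by blast
      qed
      then obtain x1 where x1: "x1 \<in> carrier G1" and cA: "\<phi> (x1,\<one>\<^bsub>G2\<^esub>) \<in> A"
        and c1: "\<phi> (x1,\<one>\<^bsub>G2\<^esub>) \<noteq> \<one>\<^bsub>\<Gamma>\<^esub>" by blast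
      have sub1: "\<And>x. x \<in> carrier G1 \<Longrightarrow> \<phi> (x,\<one>\<^bsub>G2\<^esub>) \<in> A"
      proof -
        fix x assume x: "x \<in> carrier G1"
        have "\<phi> (x,\<one>\<^bsub>G2\<^esub>) \<otimes>\<^bsub>\<Gamma>\<^esub> \<phi> (\<one>\<^bsub>G1\<^esub>,y1) = \<phi> (\<one>\<^bsub>G1\<^esub>,y1) \<otimes>\<^bsub>\<Gamma>\<^esub> \<phi> (x,\<one>\<^bsub>G2\<^esub>)"
          using phm x y1 by simp
        thus "\<phi> (x,\<one>\<^bsub>G2\<^esub>) \<in> A" using acent[OF bA b1] phc x by simp
      qed
      have sub2: "\<And>y. y \<in> carrier G2 \<Longrightarrow> \<phi> (\<one>\<^bsub>G1\<^esub>,y) \<in> A"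
      proof -
        fix y assume y: "y \<in> carrier G2"
        have "\<phi> (\<one>\<^bsub>G1\<^esub>,y) \<otimes>\<^bsub>\<Gamma>\<^esub> \<phi> (x1,\<one>\<^bsub>G2\<^esub>) = \<phi> (x1,\<one>\<^bsub>G2\<^esub>) \<otimes>\<^bsub>\<Gamma>\<^esub> \<phi> (\<one>\<^bsub>G1\<^esub>,y)"
          using phm x1 y by simp
        thus "\<phi> (\<one>\<^bsub>G1\<^esub>,y) \<in> A" using acent[OF cA c1] phc y by simp
      qed
      have HA: "?H \<subseteq> A"
      proof
        fix z assume "z \<in> ?H"
        then obtain x y where x: "x \<in> carrier G1" and y: "y \<in> carrier G2" and z: "z = \<phi> (x,y)" by auto
        have "p z = p (\<phi> (x,\<one>\<^bsub>G2\<^esub>)) \<otimes>\<^bsub>Q\<^esub> p (\<phi> (\<one>\<^bsub>G1\<^esub>,y))"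
          unfolding z using pphi1[OF x y] pm phc x y by simp
        also have "\<dots> = \<one>\<^bsub>Q\<^esub>" using kerD[OF sub1[OF x]] kerD[OF sub2[OF y]] by simp
        finally show "z \<in> A" using kerI phc x y z by simp
      qed
      have cov: "carrier Q \<subseteq> \<Union> ((\<lambda>C. p ` C) ` (rcosets\<^bsub>\<Gamma>\<^esub> ?H))"
      proof
        fix q assume "q \<in> carrier Q"
        then obtain g where g: "g \<in> carrier \<Gamma>" and q: "q = p g" using assms(7) by blast
        have "?H #>\<^bsub>\<Gamma>\<^esub> g \<in> rcosets\<^bsub>\<Gamma>\<^esub> ?H" using g unfolding RCOSETS_def by blast
        moreover have "g \<in> ?H #>\<^bsub>\<Gamma>\<^esub> g" using G.rcos_self[OF g Hsub] .
        ultimately show "q \<in> \<Union> ((\<lambda>C. p ` C) ` (rcosets\<^bsub>\<Gamma>\<^esub> ?H))" using q by blast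
      qed
      have "\<forall>C \<in> rcosets\<^bsub>\<Gamma>\<^esub> ?H. finite (p ` C)"
      proof
        fix C assume "C \<in> rcosets\<^bsub>\<Gamma>\<^esub> ?H"
        then obtain g where g: "g \<in> carrier \<Gamma>" and C: "C = ?H #>\<^bsub>\<Gamma>\<^esub> g" unfolding RCOSETS_def by blast
        have "p ` C \<subseteq> {p g}"
        proof
          fix q assume "q \<in> p ` C"
          then obtain h where h: "h \<in> ?H" and q: "q = p (h \<otimes>\<^bsub>\<Gamma>\<^esub> g)"
            unfolding C r_coset_def by blast
          have "h \<in> A" using h HA by blast
          hence "p h = \<one>\<^bsub>Q\<^esub>" and hc: "h \<in> carrier \<Gamma>" using kerD by auto
          thus "q \<in> {p g}" using q pm[OF hc g] pc[OF g] by simp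
        qed
        thus "finite (p ` C)" using finite_subset by blast
      qed
      hence "finite (\<Union> ((\<lambda>C. p ` C) ` (rcosets\<^bsub>\<Gamma>\<^esub> ?H)))" using fin by blast
      hence "finite (carrier Q)" using cov finite_subset by blast
      thus False using assms(13) by blast
    qed
  qed
qed

end
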